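(* Let $A=\{a_n\}_{n\in\mathbb Z}\subset\mathbb R$ be an almost periodic set. Then there is a number $d>0$ such that for every $\eta>0$ there exists $N_\eta$ with the property that for every half-interval $I=[x,x+l)$ of length $l=l(I)>N_\eta$, $$\left|\frac{\#(A\cap I)}{l(I)}-d\right|<\eta.$$
   Context: A discrete locally finite multiset $A=\{a_n\}_{n\in\mathbb Z}\subset\mathbb R$ (a point may occur several times in the sequence) is called almost periodic if for every $\varepsilon>0$ the set of $\varepsilon$-almost periods $$E_\varepsilon=\{\tau\in\mathbb R:\ \exists\text{ a bijection }\sigma:\mathbb Z\to\mathbb Z\text{ with }\sup_n|a_n+\tau-a_{\sigma(n)}|<\varepsilon\}$$ is relatively dense, i.e. there is $L_\varepsilon>0$ such that $E_\varepsilon\cap(x,x+L_\varepsilon)\neq\emptyset$ for every $x\in\mathbb R$. $\#(A\cap H)$ denotes the number of indices $n$ with $a_n\in H$ (multiplicities counted). *)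

theory Defs
  imports "HOL-Analysis.Analysis"
begin

text \<open>A multiset of reals is given as a sequence a :: int => real (points may repeat).
  Locally finite: every bounded interval contains a_n for only finitely many indices n.\<close>
definition locally_finite_seq :: "(int \<Rightarrow> real) \<Rightarrow> bool" where
  "locally_finite_seq a \<longleftrightarrow> (\<forall>x y. finite {n. a n \<in> {x..y}})"

definition almost_periods :: "(int \<Rightarrow> real) \<Rightarrow> real \<Rightarrow> real set" where
  "almost_periods a \<epsilon> = {\<tau>. \<exists>\<sigma>. bij \<sigma> \<and>
      (\<exists>c<\<epsilon>. \<forall>n. \<bar>a n + \<tau> - a (\<sigma> n)\<bar> \<le> c)}"

definition relatively_dense :: "real set \<Rightarrow> bool" where
  "relatively_dense E \<longleftrightarrow> (\<exists>L>0. \<forall>x. E \<inter> {x<..<x+L} \<noteq> {})"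

definition almost_periodic_set :: "(int \<Rightarrow> real) \<Rightarrow> bool" where
  "almost_periodic_set a \<longleftrightarrow> (\<forall>\<epsilon>>0. relatively_dense (almost_periods a \<epsilon>))"

definition count_in :: "(int \<Rightarrow> real) \<Rightarrow> real set \<Rightarrow> nat" where
  "count_in a H = card {n. a n \<in> H}"

end

theory Submission imports Defs begin

lemma fin_ivl:
  assumes "locally_finite_seq a"
  shows "finite {n. a n \<in> {x..<y}}"
proof -
  have "{n. a n \<in> {x..<y}} \<subseteq> {n. a n \<in> {x..y}}" by auto
  moreover have "finite {n. a n \<in> {x..y}}" using assms unfolding locally_finite_seq_def by blast
  ultimately show ?thesis by (rule finite_subset)
qed

lemma count_add:
  assumes "locally_finite_seq a" "0 \<le> l1" "0 \<le> l2"
  shows "count_in a {x..<x+(l1+l2)} = count_in a {x..<x+l1} + count_in a {x+l1..<x+l1+l2}"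
proof -
  have "{n. a n \<in> {x..<x+(l1+l2)}} = {n. a n \<in> {x..<x+l1}} \<union> {n. a n \<in> {x+l1..<x+l1+l2}}"
    using assms by auto
  moreover have "{n. a n \<in> {x..<x+l1}} \<inter> {n. a n \<in> {x+l1..<x+l1+l2}} = {}" by auto
  ultimately show ?thesis unfolding count_in_def
    using card_Un_disjoint[OF fin_ivl[OF assms(1)] fin_ivl[OF assms(1)]] by metis
qed

lemma count_mono:
  assumes "locally_finite_seq a" "S \<subseteq> {x..<y}"
  shows "count_in a S \<le> count_in a {x..<y}"
  unfolding count_in_def
  by (rule card_mono[OF fin_ivl[OF assms(1)]]) (use assms(2) in auto)

lemma shift_le:
  assumes "locally_finite_seq a" "\<tau> \<in> almost_periods a 1"
    and "\<And>u v. u \<in> S \<Longrightarrow> \<bar>u + \<tau> - v\<bar> < 1 \<Longrightarrow> v \<in> {p..<q}"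
  shows "count_in a S \<le> count_in a {p..<q}"
proof -
  obtain \<sigma> c where s: "bij \<sigma>" "c < 1" "\<And>n. \<bar>a n + \<tau> - a (\<sigma> n)\<bar> \<le> c"
    using assms(2) unfolding almost_periods_def by blast
  have "\<sigma> ` {n. a n \<in> S} \<subseteq> {n. a n \<in> {p..<q}}"
  proof
    fix m assume "m \<in> \<sigma> ` {n. a n \<in> S}"
    then obtain n where "m = \<sigma> n" "a n \<in> S" by blast
    moreover have "\<bar>a n + \<tau> - a (\<sigma> n)\<bar> < 1" using s(2) s(3)[of n] by linarith
    ultimately show "m \<in> {n. a n \<in> {p..<q}}" using assms(3) by blast
  qed
  moreover have "inj_on \<sigma> {n. a n \<in> S}" using s(1) bij_is_inj inj_on_subset by blast
  ultimately show ?thesis unfolding count_in_def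
    using card_inj_on_le fin_ivl[OF assms(1)] by blast
qed

lemma get_L:
  assumes "almost_periodic_set a"
  obtains L where "L > 0" "\<And>x. \<exists>\<tau>. \<tau> \<in> almost_periods a 1 \<and> x < \<tau> \<and> \<tau> < x + L"
  using assms unfolding almost_periodic_set_def relatively_dense_def
  by (metis (no_types, lifting) disjoint_iff greaterThanLessThan_iff zero_less_one)

lemma local_bound:
  assumes "locally_finite_seq a" "almost_periodic_set a"
  shows "\<exists>M. \<forall>z. count_in a {z..<z+h} \<le> M"
proof -
  obtain L where L: "L > 0" "\<And>x. \<exists>\<tau>. \<tau> \<in> almost_periods a 1 \<and> x < \<tau> \<and> \<tau> < x + L"
    using get_L[OF assms(2)] by blast
  have "count_in a {z..<z+h} \<le> count_in a {-1..<L+h+1}" for z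
  proof -
    obtain \<tau> where t: "\<tau> \<in> almost_periods a 1" "-z < \<tau>" "\<tau> < -z + L" using L(2)[of "-z"] by blast
    show ?thesis
      by (rule shift_le[OF assms(1) t(1)]) (use t in \<open>auto simp: abs_less_iff\<close>)
  qed
  then show ?thesis by blast
qed

lemma unif:
  assumes "locally_finite_seq a" "almost_periodic_set a"
  shows "\<exists>K\<ge>0. \<forall>x y l. l \<ge> 0 \<longrightarrow> real (count_in a {x..<x+l}) \<le> real (count_in a {y..<y+l}) + K"
proof -
  obtain L where L: "L > 0" "\<And>x. \<exists>\<tau>. \<tau> \<in> almost_periods a 1 \<and> x < \<tau> \<and> \<tau> < x + L"
    using get_L[OF assms(2)] by blast
  obtain M1 where M1: "\<And>z. count_in a {z..<z+1} \<le> M1" using local_bound[OF assms] by blast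
  obtain M2 where M2: "\<And>z. count_in a {z..<z+(L+2)} \<le> M2" using local_bound[OF assms] by blast
  have "real (count_in a {x..<x+l}) \<le> real (count_in a {y..<y+l}) + real (M1 + M2)" if "l \<ge> 0" for x y l
  proof -
    obtain \<tau> where t: "\<tau> \<in> almost_periods a 1" "y - x < \<tau>" "\<tau> < y - x + L" using L(2)[of "y-x"] by blast
    have "count_in a {x..<x+l} \<le> count_in a {y-1..<y-1+(1+(l+(L+2)))}"
      by (rule shift_le[OF assms(1) t(1)]) (use t in \<open>auto simp: abs_less_iff\<close>)
    also have "\<dots> = count_in a {y-1..<y-1+1} + count_in a {y-1+1..<y-1+1+(l+(L+2))}"
      by (rule count_add[OF assms(1)]) (use that L in auto)
    also have "count_in a {y-1+1..<y-1+1+(l+(L+2))} = count_in a {y..<y+l} + count_in a {y+l..<y+l+(L+2)}"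
      using count_add[OF assms(1) that, of "L+2" y] L by simp
    finally have "count_in a {x..<x+l} \<le> M1 + count_in a {y..<y+l} + M2"
      using M1[of "y-1"] M2[of "y+l"] by simp
    then show ?thesis by simp
  qed
  then show ?thesis by (intro exI[of _ "real (M1+M2)"]) auto
qed

lemma dense:
  assumes "locally_finite_seq a" "almost_periodic_set a"
  shows "\<exists>P>0. \<forall>x. count_in a {x..<x+P} \<ge> 1"
proof -
  obtain L where L: "L > 0" "\<And>x. \<exists>\<tau>. \<tau> \<in> almost_periods a 1 \<and> x < \<tau> \<and> \<tau> < x + L"
    using get_L[OF assms(2)] by blast
  have "count_in a {x..<x+(L+3)} \<ge> 1" for x
  proof -
    obtain \<tau> where t: "\<tau> \<in> almost_periods a 1" "x + 1 - a 0 < \<tau>" "\<tau> < x + 1 - a 0 + L"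
      using L(2) by blast
    have "1 \<le> count_in a {a 0..<a 0 + 1/2}"
    proof -
      have "0 \<in> {n. a n \<in> {a 0..<a 0 + 1/2}}" by simp
      then have "{n. a n \<in> {a 0..<a 0 + 1/2}} \<noteq> {}" by blast
      then show ?thesis unfolding count_in_def using fin_ivl[OF assms(1)]
        by (simp add: Suc_leI card_gt_0_iff)
    qed
    also have "\<dots> \<le> count_in a {x..<x+(L+3)}"
      by (rule shift_le[OF assms(1) t(1)]) (use t in \<open>auto simp: abs_less_iff\<close>)
    finally show ?thesis .
  qed
  then show ?thesis using L(1) by (intro exI[of _ "L+3"]) auto
qed


theorem proposition3:
  fixes a :: "int \<Rightarrow> real"
  assumes "locally_finite_seq a"
    and "almost_periodic_set a"
  shows "\<exists>d>0. \<forall>\<eta>>0. \<exists>N. \<forall>x l. l > N \<longrightarrow>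
           \<bar>real (count_in a {x..<x+l}) / l - d\<bar> < \<eta>"
proof -
  note lf = assms(1)
  obtain K where K0: "K \<ge> 0" and U: "\<And>x y l. l \<ge> 0 \<Longrightarrow>
      real (count_in a {x..<x+l}) \<le> real (count_in a {y..<y+l}) + K"
    using unif[OF assms] by blast
  define g where "g l = real (count_in a {0..<l})" for l
  have U1: "real (count_in a {x..<x+l}) \<le> g l + K" if "l \<ge> 0" for x l
    using U[OF that, of x 0] by (simp add: g_def)
  have U2: "g l - K \<le> real (count_in a {x..<x+l})" if "l \<ge> 0" for x l
    using U[OF that, of 0 x] by (simp add: g_def)
  have gmono: "g l \<le> g l'" if "l \<le> l'" for l l'
    unfolding g_def using count_mono[OF lf, of "{0..<l}" 0 l'] that by auto
  have gadd: "g (s + t) = g s + real (count_in a {s..<s+t})" if "s \<ge> 0" "t \<ge> 0" for s t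
    using count_add[OF lf that, of 0] by (simp add: g_def)
  have sub: "g (real n * l) \<le> real n * (g l + K)" if "l \<ge> 0" for n l
  proof (induction n)
    case 0 then show ?case by (simp add: g_def count_in_def)
  next
    case (Suc n)
    have "g (real (Suc n) * l) = g (real n * l + l)" by (simp add: algebra_simps)
    also have "\<dots> = g (real n * l) + real (count_in a {real n * l..<real n * l + l})"
      using gadd[of "real n * l" l] that by simp
    also have "\<dots> \<le> real n * (g l + K) + (g l + K)" using Suc U1[OF that, of "real n * l"] by linarith
    finally show ?case by (simp add: algebra_simps)
  qed
  have sup: "real n * (g l - K) \<le> g (real n * l)" if "l \<ge> 0" for n l
  proof (induction n)
    case 0 then show ?case by (simp add: g_def count_in_def)
  next
    case (Suc n)
    have "g (real (Suc n) * l) = g (real n * l + l)" by (simp add: algebra_simps)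
    also have "\<dots> = g (real n * l) + real (count_in a {real n * l..<real n * l + l})"
      using gadd[of "real n * l" l] that by simp
    also have "\<dots> \<ge> real n * (g l - K) + (g l - K)" using Suc U2[OF that, of "real n * l"] by linarith
    finally show ?case by (simp add: algebra_simps)
  qed
  have gpos: "g l \<ge> 0" for l by (simp add: g_def)
  have key: "(g m - K) / m \<le> (g l + K) / l" if "l > 0" "m > 0" for l m
  proof (rule ccontr)
    assume nt: "\<not> ?thesis"
    define \<delta> where "\<delta> = (g m - K) / m - (g l + K) / l"
    have \<delta>: "\<delta> > 0" using nt unfolding \<delta>_def by simp
    obtain N :: nat where N: "real N > (g l + K) / (m * \<delta>)" "N \<ge> 1"
      by (metis add.commute le_add2 less_add_one of_nat_1 of_nat_add real_arch_simple order.strict_trans1)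
    define k where "k = nat \<lceil>real N * m / l\<rceil>"
    have k1: "real k * l \<ge> real N * m"
    proof -
      have "real k \<ge> real N * m / l" unfolding k_def by linarith
      then show ?thesis using that by (simp add: field_simps)
    qed
    have k2: "real k \<le> real N * m / l + 1"
    proof -
      have "real N * m / l \<ge> 0" using that by simp
      then show ?thesis unfolding k_def by linarith
    qed
    have Npos: "real N > 0" using N(2) by simp
    have "real N * (g m - K) \<le> g (real N * m)" using sup that by simp
    also have "\<dots> \<le> g (real k * l)" using gmono k1 by blast
    also have "\<dots> \<le> real k * (g l + K)" using sub that by simp
    also have "\<dots> \<le> (real N * m / l + 1) * (g l + K)"
      using k2 gpos[of l] K0 by (intro mult_right_mono) auto
    finally have ineq: "real N * (g m - K) \<le> (real N * m / l + 1) * (g l + K)" .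
    have "(g m - K) / m \<le> (g l + K) / l + (g l + K) / (real N * m)"
    proof -
      have "(g m - K) / m = real N * (g m - K) / (real N * m)" using Npos that by simp
      also have "\<dots> \<le> (real N * m / l + 1) * (g l + K) / (real N * m)"
        using ineq Npos that by (intro divide_right_mono) auto
      also have "\<dots> = (g l + K) / l + (g l + K) / (real N * m)"
        using Npos that by (simp add: field_simps)
      finally show ?thesis .
    qed
    moreover have "(g l + K) / (real N * m) < \<delta>"
    proof -
      have "(g l + K) / (m * \<delta>) * (m * \<delta>) < real N * (m * \<delta>)"
        using N(1) \<delta> that by (intro mult_strict_right_mono) auto
      moreover have "(g l + K) / (m * \<delta>) * (m * \<delta>) = g l + K" using \<delta> that by simp
      ultimately have "g l + K < real N * m * \<delta>" by (simp add: mult.assoc)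
      then show ?thesis using Npos that by (simp add: field_simps)
    qed
    ultimately show False unfolding \<delta>_def by linarith
  qed
  define d where "d = Inf {(g l + K) / l | l. l > 0}"
  have d_le: "d \<le> (g l + K) / l" if "l > 0" for l
    unfolding d_def
  proof (rule cInf_lower)
    show "(g l + K) / l \<in> {(g l + K) / l | l. l > 0}" using that by blast
    show "bdd_below {(g l + K) / l | l. l > 0}"
      unfolding bdd_below_def using key[of _ 1] by auto
  qed
  have d_ge: "(g m - K) / m \<le> d" if "m > 0" for m
    unfolding d_def
    by (rule cInf_greatest) (use key that in \<open>auto intro: exI[of _ 1]\<close>)
  obtain P where P: "P > 0" "\<And>x. count_in a {x..<x+P} \<ge> 1" using dense[OF assms] by blast
  have gP: "g (real n * P) \<ge> real n" for n
  proof (induction n)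
    case 0 then show ?case by (simp add: g_def)
  next
    case (Suc n)
    have "g (real (Suc n) * P) = g (real n * P + P)" by (simp add: algebra_simps)
    also have "\<dots> = g (real n * P) + real (count_in a {real n * P..<real n * P + P})"
      using gadd[of "real n * P" P] P(1) by simp
    also have "\<dots> \<ge> real n + 1" using Suc P(2)[of "real n * P"] by linarith
    finally show ?case by simp
  qed
  define n where "n = nat \<lceil>K\<rceil> + 1"
  have nK: "real n > K" unfolding n_def by linarith
  have "0 < (g (real n * P) - K) / (real n * P)"
    using gP[of n] nK P(1) K0 by (intro divide_pos_pos) auto
  also have "\<dots> \<le> d" using d_ge[of "real n * P"] nK K0 P(1) by simp
  finally have dpos: "d > 0" .
  have main: "\<bar>real (count_in a {x..<x+l}) / l - d\<bar> \<le> 2 * K / l" if "l > 0" for x l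
  proof -
    have "g l - K \<le> d * l" using d_ge[OF that] that by (simp add: field_simps)
    moreover have "d * l \<le> g l + K" using d_le[OF that] that by (simp add: field_simps)
    moreover note U1[of l x] U2[of l x]
    ultimately have "\<bar>real (count_in a {x..<x+l}) - d * l\<bar> \<le> 2 * K" using that by auto
    then have "\<bar>real (count_in a {x..<x+l}) - d * l\<bar> / l \<le> 2 * K / l"
      using that by (intro divide_right_mono) auto
    moreover have "\<bar>real (count_in a {x..<x+l}) - d * l\<bar> / l = \<bar>real (count_in a {x..<x+l}) / l - d\<bar>"
      using that by (simp add: field_simps abs_div_pos[symmetric])
    ultimately show ?thesis by simp
  qed
  have fin: "\<exists>N. \<forall>x l. l > N \<longrightarrow> \<bar>real (count_in a {x..<x+l}) / l - d\<bar> < \<eta>" if \<eta>: "\<eta> > 0" for \<eta> :: real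
  proof -
    show "\<exists>N. \<forall>x l. l > N \<longrightarrow> \<bar>real (count_in a {x..<x+l}) / l - d\<bar> < \<eta>"
    proof (intro exI[of _ "2 * K / \<eta>"] allI impI)
      fix x l assume l: "2 * K / \<eta> < l"
      have lpos: "l > 0" using l K0 \<eta> by (smt (verit) divide_nonneg_pos)
      have "2 * K < \<eta> * l" using l \<eta> by (simp add: field_simps)
      then have "2 * K / l < \<eta>" using lpos by (simp add: field_simps)
      then show "\<bar>real (count_in a {x..<x+l}) / l - d\<bar> < \<eta>" using main[OF lpos, of x] by linarith
    qed
  qed
  show ?thesis using dpos fin by blast
qed

end
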